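(* Let $\mathcal H$ be a separable complex Hilbert space and $S_2$ the Hilbert space of Hilbert–Schmidt operators on $\mathcal H$ with $\langle\eta,\tau\rangle_2=\operatorname{tr}(\eta^*\tau)$. Let $A\in\mathcal B(S_2)$ be given by $A\eta=a_1\eta b_1+a_2\eta b_2$ with $a_1,a_2,b_1,b_2\in\mathcal B(\mathcal H)$. If $A$ is positive definite, then there exist non-negative $\hat a_1,\hat a_2\in\mathcal B(\mathcal H)$ with $\ker\hat a_1\cap\ker\hat a_2=\{0\}$ and positive definite $\hat b_1,\hat b_2\in\mathcal B(\mathcal H)$ such that $A\eta=\hat a_1\eta\hat b_1+\hat a_2\eta\hat b_2$ for all $\eta\in S_2$.
   Context: For a bounded operator $T$ on a Hilbert space: $T\ge0$ if $\langle x,Tx\rangle\ge0$ for all $x$; positive definite if $\inf\{\langle x,Tx\rangle:\|x\|=1\}>0$. Inner products are anti-linear in the left argument. *)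

theory Defs
  imports "HOL-Analysis.Analysis"
begin

class complex_vector = real_vector +
  fixes scaleC :: "complex \<Rightarrow> 'a \<Rightarrow> 'a"  (infixr \<open>*\<^sub>C\<close> 75)
  assumes scaleC_add_right: "a *\<^sub>C (x + y) = a *\<^sub>C x + a *\<^sub>C y"
    and scaleC_add_left: "(a + b) *\<^sub>C x = a *\<^sub>C x + b *\<^sub>C x"
    and scaleC_scaleC: "a *\<^sub>C (b *\<^sub>C x) = (a * b) *\<^sub>C x"
    and scaleC_one: "1 *\<^sub>C x = x"
    and scaleR_scaleC: "scaleR r x = complex_of_real r *\<^sub>C x"

text \<open>Complex inner product spaces; the inner product is anti-linear in the left argument,
  and the norm is the one induced by the inner product.\<close>
class complex_inner = complex_vector + real_normed_vector +
  fixes cinner :: "'a \<Rightarrow> 'a \<Rightarrow> complex"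
  assumes cinner_commute: "cinner x y = cnj (cinner y x)"
    and cinner_add_right: "cinner x (y + z) = cinner x y + cinner x z"
    and cinner_scaleC_right: "cinner x (a *\<^sub>C y) = a * cinner x y"
    and cinner_ge_zero: "Im (cinner x x) = 0 \<and> Re (cinner x x) \<ge> 0"
    and cinner_eq_zero_iff: "cinner x x = 0 \<longleftrightarrow> x = 0"
    and norm_eq_sqrt_cinner: "norm x = sqrt (Re (cinner x x))"

text \<open>A (complex) Hilbert space is a complete complex inner product space; we use the
  sort "{complex_inner, complete_space}".\<close>

definition bounded_clinear :: "('a::{complex_vector, real_normed_vector} \<Rightarrow> 'b::{complex_vector, real_normed_vector}) \<Rightarrow> bool" where
  "bounded_clinear T \<longleftrightarrow>
     (\<forall>x y. T (x + y) = T x + T y) \<and> (\<forall>c x. T (c *\<^sub>C x) = c *\<^sub>C T x) \<and>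
     (\<exists>K. \<forall>x. norm (T x) \<le> norm x * K)"

text \<open>Non-negativity and positive definiteness of an operator T on a subspace
  V w.r.t. a sesquilinear form ip:
  "T \<ge> 0" iff "\<langle>x,Tx\<rangle> \<ge> 0" for all x;
  positive definite iff "inf {\<langle>x,Tx\<rangle> : \<parallel>x\<parallel> = 1} > 0",
  i.e. there is "c > 0" with "\<langle>x,Tx\<rangle> \<ge> c \<parallel>x\<parallel>^2".\<close>
definition nonneg_wrt :: "('v \<Rightarrow> 'v \<Rightarrow> complex) \<Rightarrow> 'v set \<Rightarrow> ('v \<Rightarrow> 'v) \<Rightarrow> bool" where
  "nonneg_wrt ip V T \<longleftrightarrow> (\<forall>x\<in>V. Im (ip x (T x)) = 0 \<and> Re (ip x (T x)) \<ge> 0)"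

definition posdef_wrt :: "('v \<Rightarrow> 'v \<Rightarrow> complex) \<Rightarrow> 'v set \<Rightarrow> ('v \<Rightarrow> 'v) \<Rightarrow> bool" where
  "posdef_wrt ip V T \<longleftrightarrow>
     (\<exists>c>0. \<forall>x\<in>V. Im (ip x (T x)) = 0 \<and> Re (ip x (T x)) \<ge> c * Re (ip x x))"

definition orthonormal_basis :: "'a::complex_inner set \<Rightarrow> bool" where
  "orthonormal_basis B \<longleftrightarrow>
     (\<forall>e\<in>B. cinner e e = 1) \<and> (\<forall>e\<in>B. \<forall>f\<in>B. e \<noteq> f \<longrightarrow> cinner e f = 0) \<and>
     (\<forall>x. (\<forall>e\<in>B. cinner e x = 0) \<longrightarrow> x = 0)"

definition hilbert_schmidt :: "'a::complex_inner set \<Rightarrow> ('a \<Rightarrow> 'a) \<Rightarrow> bool" where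
  "hilbert_schmidt B \<eta> \<longleftrightarrow> bounded_clinear \<eta> \<and> ((\<lambda>e. (norm (\<eta> e))\<^sup>2) summable_on B)"

text \<open>"\<langle>\<eta>,\<tau>\<rangle>_2 = tr(\<eta>^*\<tau>) = \<Sum>_e \<langle>e, \<eta>^*\<tau> e\<rangle> = \<Sum>_e \<langle>\<eta> e, \<tau> e\<rangle>".\<close>
definition hs_inner :: "'a::complex_inner set \<Rightarrow> ('a \<Rightarrow> 'a) \<Rightarrow> ('a \<Rightarrow> 'a) \<Rightarrow> complex" where
  "hs_inner B \<eta> \<tau> = (\<Sum>\<^sub>\<infinity>e\<in>B. cinner (\<eta> e) (\<tau> e))"

end

theory Submission
  imports Defs
begin

lemma scaleC_zero_left[simp]: "(0::complex) *\<^sub>C (x::'a::complex_vector) = 0"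
proof -
  have "(0::complex) *\<^sub>C x = (0 + 0) *\<^sub>C x" by simp
  also have "\<dots> = 0 *\<^sub>C x + 0 *\<^sub>C x" by (rule scaleC_add_left)
  finally show ?thesis by simp
qed

lemma scaleC_zero_right[simp]: "a *\<^sub>C (0::'a::complex_vector) = 0"
proof -
  have "a *\<^sub>C (0::'a) = a *\<^sub>C (0 + 0)" by simp
  also have "\<dots> = a *\<^sub>C 0 + a *\<^sub>C 0" by (rule scaleC_add_right)
  finally show ?thesis by simp
qed

lemma scaleC_minus_left: "(- a) *\<^sub>C (x::'a::complex_vector) = - (a *\<^sub>C x)"
proof -
  have "(- a) *\<^sub>C x + a *\<^sub>C x = 0" by (simp flip: scaleC_add_left)
  then show ?thesis by (simp add: eq_neg_iff_add_eq_0)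
qed

lemma scaleC_minus_right: "a *\<^sub>C (- x::'a::complex_vector) = - (a *\<^sub>C x)"
proof -
  have "a *\<^sub>C (- x) + a *\<^sub>C x = 0" by (simp flip: scaleC_add_right)
  then show ?thesis by (simp add: eq_neg_iff_add_eq_0)
qed

lemma scaleC_diff_left: "(a - b) *\<^sub>C (x::'a::complex_vector) = a *\<^sub>C x - b *\<^sub>C x"
  using scaleC_add_left[of a "-b" x] by (simp add: scaleC_minus_left)

lemma scaleC_diff_right: "a *\<^sub>C (x - y::'a::complex_vector) = a *\<^sub>C x - a *\<^sub>C y"
  using scaleC_add_right[of a x "-y"] by (simp add: scaleC_minus_right)

lemma scaleC_one'[simp]: "1 *\<^sub>C (x::'a::complex_vector) = x" by (rule scaleC_one)

lemma scaleC_sum_right: "a *\<^sub>C (\<Sum>i\<in>F. f i) = (\<Sum>i\<in>F. a *\<^sub>C (f i::'a::complex_vector))"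
  by (induction F rule: infinite_finite_induct) (auto simp: scaleC_add_right)

lemma scaleC_sum_left: "(\<Sum>i\<in>F. f i) *\<^sub>C (x::'a::complex_vector) = (\<Sum>i\<in>F. f i *\<^sub>C x)"
  by (induction F rule: infinite_finite_induct) (auto simp: scaleC_add_left)

lemma scaleC_cancel: "a \<noteq> 0 \<Longrightarrow> a *\<^sub>C x = a *\<^sub>C y \<Longrightarrow> (x::'a::complex_vector) = y"
  by (metis scaleC_scaleC scaleC_one nonzero_divide_eq_eq divide_self_if mult.commute
       right_inverse)

lemma cinner_add_left: "cinner (x + y) (z::'a::complex_inner) = cinner x z + cinner y z"
  by (metis cinner_commute cinner_add_right complex_cnj_add)

lemma cinner_scaleC_left: "cinner (a *\<^sub>C x) (y::'a::complex_inner) = cnj a * cinner x y"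
  by (metis cinner_commute cinner_scaleC_right complex_cnj_mult)

lemma cinner_zero_right[simp]: "cinner x (0::'a::complex_inner) = 0"
  using cinner_scaleC_right[of x 0 0] by simp

lemma cinner_zero_left[simp]: "cinner (0::'a::complex_inner) x = 0"
  using cinner_scaleC_left[of 0 0 x] by simp

lemma cinner_minus_right: "cinner x (- y::'a::complex_inner) = - cinner x y"
  using cinner_add_right[of x y "-y"] by (simp add: eq_neg_iff_add_eq_0 add.commute)

lemma cinner_minus_left: "cinner (- x::'a::complex_inner) y = - cinner x y"
  using cinner_add_left[of x "-x" y] by (simp add: eq_neg_iff_add_eq_0 add.commute)

lemma cinner_diff_right: "cinner x (y - z::'a::complex_inner) = cinner x y - cinner x z"
  using cinner_add_right[of x y "-z"] by (simp add: cinner_minus_right)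

lemma cinner_diff_left: "cinner (x - y::'a::complex_inner) z = cinner x z - cinner y z"
  using cinner_add_left[of x "-y" z] by (simp add: cinner_minus_left)

lemma cinner_sum_right: "cinner x (\<Sum>i\<in>F. f i) = (\<Sum>i\<in>F. cinner (x::'a::complex_inner) (f i))"
  by (induction F rule: infinite_finite_induct) (auto simp: cinner_add_right)

lemma cinner_sum_left: "cinner (\<Sum>i\<in>F. f i) x = (\<Sum>i\<in>F. cinner (f i) (x::'a::complex_inner))"
  by (induction F rule: infinite_finite_induct) (auto simp: cinner_add_left)

lemma cinner_self: "cinner x x = complex_of_real ((norm (x::'a::complex_inner))\<^sup>2)"
proof -
  have "Im (cinner x x) = 0" "Re (cinner x x) \<ge> 0" using cinner_ge_zero by auto
  moreover have "(norm x)\<^sup>2 = Re (cinner x x)" using norm_eq_sqrt_cinner[of x] calculation by simp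
  ultimately show ?thesis by (simp add: complex_eq_iff)
qed

lemma Re_cinner_self: "Re (cinner x x) = (norm (x::'a::complex_inner))\<^sup>2"
  by (simp add: cinner_self)

lemma cinner_scaleR_right: "cinner x (r *\<^sub>R y) = complex_of_real r * cinner x (y::'a::complex_inner)"
  by (simp add: scaleR_scaleC cinner_scaleC_right)

lemma Cauchy_Schwarz: "cmod (cinner x y) \<le> norm x * norm (y::'a::complex_inner)"
proof (cases "y = 0")
  case True then show ?thesis by simp
next
  case False
  define r where "r = (norm y)\<^sup>2"
  have r: "r > 0" using False by (simp add: r_def)
  define t where "t = cinner y x / complex_of_real r"
  have yy: "cinner y y = complex_of_real r" by (simp add: r_def cinner_self)
  have "cinner (x - t *\<^sub>C y) (x - t *\<^sub>C y) =
        cinner x x - t * cinner x y - cnj t * cinner y x + cnj t * t * cinner y y"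
    by (simp add: cinner_diff_left cinner_diff_right cinner_scaleC_left cinner_scaleC_right algebra_simps)
  also have "\<dots> = cinner x x - complex_of_real ((cmod (cinner x y))\<^sup>2 / r)"
  proof -
    have c: "cinner x y = cnj (cinner y x)" by (rule cinner_commute)
    have m: "complex_of_real ((cmod (cinner x y))\<^sup>2) = cinner y x * cnj (cinner y x)"
      by (simp only: c complex_mod_cnj complex_norm_square)
    have rr: "complex_of_real r \<noteq> 0" using r by simp
    have "t * cinner x y = complex_of_real ((cmod (cinner x y))\<^sup>2 / r)"
      unfolding of_real_divide m unfolding t_def c using rr by simp
    moreover have "cnj t * cinner y x = complex_of_real ((cmod (cinner x y))\<^sup>2 / r)"
      unfolding of_real_divide m unfolding t_def c using rr by (simp add: mult.commute)
    moreover have "cnj t * t * cinner y y = complex_of_real ((cmod (cinner x y))\<^sup>2 / r)"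
      unfolding of_real_divide m unfolding t_def c yy using rr by (simp add: field_simps)
    ultimately show ?thesis by simp
  qed
  finally have "Re (cinner (x - t *\<^sub>C y) (x - t *\<^sub>C y)) = (norm x)\<^sup>2 - (cmod (cinner x y))\<^sup>2 / r"
    by (simp add: cinner_self)
  moreover have "Re (cinner (x - t *\<^sub>C y) (x - t *\<^sub>C y)) \<ge> 0" using cinner_ge_zero by blast
  ultimately have "(cmod (cinner x y))\<^sup>2 / r \<le> (norm x)\<^sup>2" by linarith
  then have "(cmod (cinner x y))\<^sup>2 \<le> (norm x)\<^sup>2 * (norm y)\<^sup>2" using r by (simp add: r_def field_simps)
  then have "(cmod (cinner x y))\<^sup>2 \<le> (norm x * norm y)\<^sup>2" by (simp add: power_mult_distrib)
  then show ?thesis by (rule power2_le_imp_le) simp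
qed

lemma norm_scaleC: "norm (c *\<^sub>C x) = cmod c * norm (x::'a::complex_inner)"
proof -
  have "(norm (c *\<^sub>C x))\<^sup>2 = Re (cinner (c *\<^sub>C x) (c *\<^sub>C x))" by (simp add: Re_cinner_self)
  also have "\<dots> = Re (cnj c * c * cinner x x)" by (simp only: cinner_scaleC_left cinner_scaleC_right mult.assoc mult.left_commute)
  also have "\<dots> = (cmod c)\<^sup>2 * (norm x)\<^sup>2"
  proof -
    have "cnj c * c = complex_of_real ((cmod c)\<^sup>2)" by (simp only: complex_norm_square mult.commute)
    then show ?thesis unfolding cinner_self by (simp only: of_real_mult[symmetric] Re_complex_of_real)
  qed
  finally have "(norm (c *\<^sub>C x))\<^sup>2 = (cmod c * norm x)\<^sup>2" by (simp add: power_mult_distrib)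
  then show ?thesis by (simp add: power2_eq_iff_nonneg)
qed

context
  fixes T :: "'a::complex_inner \<Rightarrow> 'b::complex_inner"
  assumes T: "bounded_clinear T"
begin

lemma bcl_add: "T (x + y) = T x + T y" using T unfolding bounded_clinear_def by blast
lemma bcl_scaleC: "T (c *\<^sub>C x) = c *\<^sub>C T x" using T unfolding bounded_clinear_def by blast
lemma bcl_zero: "T 0 = 0" using bcl_scaleC[of 0 0] by simp
lemma bcl_minus: "T (- x) = - T x" using bcl_add[of x "-x"] bcl_zero by (simp add: eq_neg_iff_add_eq_0 add.commute)
lemma bcl_diff: "T (x - y) = T x - T y" using bcl_add[of x "-y"] by (simp add: bcl_minus)
lemma bcl_sum: "T (\<Sum>i\<in>F. f i) = (\<Sum>i\<in>F. T (f i))"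
  by (induction F rule: infinite_finite_induct) (auto simp: bcl_add bcl_zero)
lemma bcl_bound: "\<exists>K>0. \<forall>x. norm (T x) \<le> norm x * K"
proof -
  obtain K where K: "\<And>x. norm (T x) \<le> norm x * K" using T unfolding bounded_clinear_def by blast
  have "norm (T x) \<le> norm x * (max K 1)" for x
    by (rule order.trans[OF K]) (simp add: mult_left_mono)
  then show ?thesis by (intro exI[of _ "max K 1"]) auto
qed
lemma bcl_bounded_linear: "bounded_linear T"
proof -
  obtain K where K: "\<And>x. norm (T x) \<le> norm x * K" using T unfolding bounded_clinear_def by blast
  show ?thesis
    by (rule bounded_linear_intro[where K=K]) (auto simp: bcl_add scaleR_scaleC bcl_scaleC K)
qed
lemma bcl_functional: "bounded_linear (\<lambda>z. cinner w (T z))"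
proof -
  obtain K where K: "K > 0" "\<And>x. norm (T x) \<le> norm x * K" using bcl_bound by blast
  have "norm (cinner w (T z)) \<le> norm z * (norm w * K)" for z
  proof -
    have "norm (cinner w (T z)) \<le> norm w * norm (T z)" using Cauchy_Schwarz[of w "T z"] by simp
    also have "\<dots> \<le> norm w * (norm z * K)" by (rule mult_left_mono[OF K(2)]) simp
    finally show ?thesis by (simp add: algebra_simps)
  qed
  then show ?thesis
    by (intro bounded_linear_intro[where K="norm w * K"])
       (auto simp: bcl_add cinner_add_right scaleR_scaleC bcl_scaleC cinner_scaleC_right scaleR_conv_of_real)
qed
end

lemma bcl_quad_bound:
  fixes T :: "'a::complex_inner \<Rightarrow> 'a" assumes T: "bounded_clinear T"
  shows "\<exists>K>0. \<forall>x. cmod (cinner x (T x)) \<le> K * (norm x)\<^sup>2"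
proof -
  obtain K where K: "K > 0" "\<And>x. norm (T x) \<le> norm x * K" using bcl_bound[OF T] by blast
  have "cmod (cinner x (T x)) \<le> K * (norm x)\<^sup>2" for x :: 'a
  proof -
    have "cmod (cinner x (T x)) \<le> norm x * norm (T x)" by (rule Cauchy_Schwarz)
    also have "\<dots> \<le> norm x * (norm x * K)" by (rule mult_left_mono[OF K(2)]) simp
    finally show ?thesis by (simp add: power2_eq_square algebra_simps)
  qed
  then show ?thesis using K by blast
qed
lemma bcl_id: "bounded_clinear (\<lambda>x. x)"
  unfolding bounded_clinear_def by (auto intro: exI[of _ 1])

lemma bcl_zero_op: "bounded_clinear (\<lambda>x. 0)"
  unfolding bounded_clinear_def by (auto intro: exI[of _ 0])

lemma bcl_comp:
  fixes S :: "'b::complex_inner \<Rightarrow> 'c::complex_inner" and T :: "'a::complex_inner \<Rightarrow> 'b"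
  shows "bounded_clinear S \<Longrightarrow> bounded_clinear T \<Longrightarrow> bounded_clinear (\<lambda>x. S (T x))"
proof -
  assume S: "bounded_clinear S" and T: "bounded_clinear T"
  obtain K where K: "K > 0" "\<And>x. norm (S x) \<le> norm x * K" using bcl_bound[OF S] by blast
  obtain L where L: "L > 0" "\<And>x. norm (T x) \<le> norm x * L" using bcl_bound[OF T] by blast
  have "norm (S (T x)) \<le> norm x * (L * K)" for x
    by (rule order.trans[OF K(2)]) (use L K in \<open>auto simp: mult.assoc[symmetric] intro: mult_right_mono\<close>)
  then show ?thesis unfolding bounded_clinear_def
    by (auto simp: bcl_add[OF S] bcl_add[OF T] bcl_scaleC[OF S] bcl_scaleC[OF T])
qed

lemma bcl_plus:
  fixes S T :: "'a::complex_inner \<Rightarrow> 'b::complex_inner"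
  shows "bounded_clinear S \<Longrightarrow> bounded_clinear T \<Longrightarrow> bounded_clinear (\<lambda>x. S x + T x)"
proof -
  assume S: "bounded_clinear S" and T: "bounded_clinear T"
  obtain K where K: "K > 0" "\<And>x. norm (S x) \<le> norm x * K" using bcl_bound[OF S] by blast
  obtain L where L: "L > 0" "\<And>x. norm (T x) \<le> norm x * L" using bcl_bound[OF T] by blast
  have "norm (S x + T x) \<le> norm x * (K + L)" for x
    by (rule order.trans[OF norm_triangle_ineq]) (use L K in \<open>auto simp: distrib_left intro: add_mono\<close>)
  then show ?thesis unfolding bounded_clinear_def
    by (auto simp: bcl_add[OF S] bcl_add[OF T] bcl_scaleC[OF S] bcl_scaleC[OF T] scaleC_add_right)
qed

lemma bcl_scale:
  fixes T :: "'a::complex_inner \<Rightarrow> 'b::complex_inner"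
  shows "bounded_clinear T \<Longrightarrow> bounded_clinear (\<lambda>x. c *\<^sub>C (T x :: 'b::complex_inner))"
proof -
  assume T: "bounded_clinear T"
  obtain L where L: "L > 0" "\<And>x. norm (T x) \<le> norm x * L" using bcl_bound[OF T] by blast
  have "norm (c *\<^sub>C T x) \<le> norm x * (cmod c * L)" for x
    using mult_left_mono[OF L(2)[of x], of "cmod c"] by (simp add: norm_scaleC algebra_simps)
  then show ?thesis unfolding bounded_clinear_def
    by (auto simp: bcl_add[OF T] bcl_scaleC[OF T] scaleC_add_right scaleC_scaleC mult.commute
        intro!: exI[of _ "cmod c * L"])
qed

lemma bcl_rank_one: "bounded_clinear (\<lambda>z. cinner y z *\<^sub>C (x::'a::complex_inner))"
proof -
  have "norm (cinner y z *\<^sub>C x) \<le> norm z * (norm y * norm x)" for z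
    using mult_right_mono[OF Cauchy_Schwarz[of y z], of "norm x"]
    by (simp add: norm_scaleC algebra_simps)
  then show ?thesis unfolding bounded_clinear_def
    by (auto simp: cinner_add_right scaleC_add_left cinner_scaleC_right scaleC_scaleC)
qed

lemma polarization_zero:
  assumes T: "bounded_clinear (T::'a::complex_inner \<Rightarrow> 'a)" and Z: "\<And>x. cinner x (T x) = 0"
  shows "T y = 0"
proof -
  have 1: "cinner x (T y) + cinner y (T x) = 0" for x y
    using Z[of "x + y"] Z[of x] Z[of y] by (simp add: bcl_add[OF T] cinner_add_left cinner_add_right add.commute)
  have 2: "cinner x (T y) - cinner y (T x) = 0" for x y
    using 1[of x "\<i> *\<^sub>C y"]
    by (simp add: bcl_scaleC[OF T] cinner_scaleC_left cinner_scaleC_right algebra_simps)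
  have "cinner x (T y) = 0" for x using 1[of x y] 2[of x y] by simp
  from this[of "T y"] show ?thesis using cinner_eq_zero_iff by blast
qed

lemma summable_on_tail_Cauchy:
  fixes f :: "'i \<Rightarrow> 'a::{real_normed_vector, complete_space}"
  assumes tail: "\<And>\<epsilon>. \<epsilon> > 0 \<Longrightarrow> \<exists>F0. finite F0 \<and> F0 \<subseteq> A \<and>
                    (\<forall>G. finite G \<longrightarrow> G \<subseteq> A \<longrightarrow> G \<inter> F0 = {} \<longrightarrow> norm (sum f G) < \<epsilon>)"
  shows "f summable_on A"
proof -
  have "\<exists>P. eventually P (finite_subsets_at_top A) \<and>
              (\<forall>F F'. P F \<and> P F' \<longrightarrow> dist (sum f F) (sum f F') < e)" if "e > 0" for e
  proof -
    obtain F0 where F0: "finite F0" "F0 \<subseteq> A"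
      "\<And>G. finite G \<Longrightarrow> G \<subseteq> A \<Longrightarrow> G \<inter> F0 = {} \<Longrightarrow> norm (sum f G) < e/2"
      using tail[of "e/2"] \<open>e > 0\<close> by auto
    define P where "P F \<longleftrightarrow> finite F \<and> F0 \<subseteq> F \<and> F \<subseteq> A" for F
    have ev: "eventually P (finite_subsets_at_top A)"
      unfolding eventually_finite_subsets_at_top P_def using F0 by auto
    have "dist (sum f F1) (sum f F2) < e" if "P F1" "P F2" for F1 F2
    proof -
      have s1: "sum f F1 = sum f F0 + sum f (F1 - F0)"
        using that by (simp add: P_def sum.subset_diff[of F0 F1])
      have s2: "sum f F2 = sum f F0 + sum f (F2 - F0)"
        using that by (simp add: P_def sum.subset_diff[of F0 F2])
      have "dist (sum f F1) (sum f F2) = norm (sum f (F1 - F0) - sum f (F2 - F0))"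
        by (simp add: dist_norm s1 s2)
      also have "\<dots> \<le> norm (sum f (F1 - F0)) + norm (sum f (F2 - F0))" by (rule norm_triangle_ineq4)
      also have "\<dots> < e/2 + e/2"
        by (intro add_strict_mono F0(3)) (use that in \<open>auto simp: P_def\<close>)
      finally show ?thesis by simp
    qed
    then show ?thesis using ev by blast
  qed
  then have "cauchy_filter (filtermap (sum f) (finite_subsets_at_top A))"
    by (simp add: cauchy_filter_metric_filtermap)
  moreover have "complete (UNIV::'a set)"
    by (meson Cauchy_convergent UNIV_I complete_def convergent_def)
  ultimately obtain L' where "(sum f \<longlongrightarrow> L') (finite_subsets_at_top A)"
    using complete_uniform[where S=UNIV] by (force simp add: filterlim_def)
  then show ?thesis
    using summable_on_def has_sum_def by blast
qed

context
  fixes B :: "'a::{complex_inner,complete_space} set"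
  assumes ONB: "orthonormal_basis B"
begin

lemma onb_parts: "\<forall>e\<in>B. cinner e e = 1" "\<forall>e\<in>B. \<forall>f\<in>B. e \<noteq> f \<longrightarrow> cinner e f = 0"
  "\<forall>x. (\<forall>e\<in>B. cinner e x = 0) \<longrightarrow> x = 0"
  using ONB unfolding orthonormal_basis_def by simp_all
lemma onb_norm: "e \<in> B \<Longrightarrow> cinner e e = 1" using onb_parts(1) by simp
lemma onb_orth: "e \<in> B \<Longrightarrow> f \<in> B \<Longrightarrow> e \<noteq> f \<Longrightarrow> cinner e f = 0"
  using onb_parts(2) by simp
lemma onb_total: "(\<And>e. e \<in> B \<Longrightarrow> cinner e x = 0) \<Longrightarrow> x = 0"
  using onb_parts(3) by simp
lemma onb_delta: "e \<in> B \<Longrightarrow> f \<in> B \<Longrightarrow> cinner e f = (if e = f then 1 else 0)"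
  using onb_norm onb_orth by auto

lemma onb_cinner_sum_vec:
  assumes "finite F" "F \<subseteq> B" "e' \<in> F"
  shows "cinner e' (\<Sum>e\<in>F. d e *\<^sub>C e) = d e'"
proof -
  have "cinner e' (\<Sum>e\<in>F. d e *\<^sub>C e) = (\<Sum>e\<in>F. d e * (if e' = e then 1 else 0))"
    unfolding cinner_sum_right
  proof (rule sum.cong)
    fix x assume "x \<in> F"
    then have "x \<in> B" "e' \<in> B" using assms by auto
    then show "cinner e' (d x *\<^sub>C x) = d x * (if e' = x then 1 else 0)"
      by (simp add: cinner_scaleC_right onb_delta)
  qed simp
  also have "\<dots> = d e'" using assms by (simp add: if_distrib cong: if_cong)
  finally show ?thesis .
qed

lemma onb_cinner_sums:
  assumes "finite F" "F \<subseteq> B"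
  shows "cinner (\<Sum>e\<in>F. c e *\<^sub>C e) (\<Sum>e\<in>F. d e *\<^sub>C e) = (\<Sum>e\<in>F. cnj (c e) * d e)"
  unfolding cinner_sum_left
  by (rule sum.cong) (use assms in \<open>auto simp: cinner_scaleC_left onb_cinner_sum_vec\<close>)

lemma onb_norm_sum:
  assumes "finite F" "F \<subseteq> B"
  shows "(norm (\<Sum>e\<in>F. c e *\<^sub>C e))\<^sup>2 = (\<Sum>e\<in>F. (cmod (c e))\<^sup>2)"
proof -
  have "(norm (\<Sum>e\<in>F. c e *\<^sub>C e))\<^sup>2 = Re (\<Sum>e\<in>F. cnj (c e) * c e)"
    by (simp add: Re_cinner_self[symmetric] onb_cinner_sums[OF assms])
  also have "\<dots> = (\<Sum>e\<in>F. (cmod (c e))\<^sup>2)"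
  proof -
    have "\<And>e. cnj (c e) * c e = complex_of_real ((cmod (c e))\<^sup>2)"
      by (simp only: complex_norm_square mult.commute)
    then show ?thesis by (simp only: Re_sum Re_complex_of_real)
  qed
  finally show ?thesis .
qed

lemma bessel:
  assumes "finite F" "F \<subseteq> B"
  shows "(\<Sum>e\<in>F. (cmod (cinner e y))\<^sup>2) \<le> (norm y)\<^sup>2"
proof -
  define s where "s = (\<Sum>e\<in>F. cinner e y *\<^sub>C e)"
  define \<sigma> where "\<sigma> = (\<Sum>e\<in>F. (cmod (cinner e y))\<^sup>2)"
  have cs: "(\<Sum>e\<in>F. cnj (cinner e y) * cinner e y) = complex_of_real \<sigma>"
  proof -
    have "\<And>e. cnj (cinner e y) * cinner e y = complex_of_real ((cmod (cinner e y))\<^sup>2)"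
      by (simp only: complex_norm_square mult.commute)
    then show ?thesis by (simp only: \<sigma>_def of_real_sum)
  qed
  have sy: "cinner s y = complex_of_real \<sigma>"
    unfolding s_def cinner_sum_left by (simp add: cinner_scaleC_left cs)
  have ss: "cinner s s = complex_of_real \<sigma>"
    unfolding s_def by (simp add: onb_cinner_sums[OF assms] cs)
  have ys: "cinner y s = complex_of_real \<sigma>" using sy cinner_commute[of y s] by simp
  have "cinner (y - s) (y - s) = cinner y y - complex_of_real \<sigma>"
    by (simp add: cinner_diff_left cinner_diff_right sy ss ys)
  then have "Re (cinner (y - s) (y - s)) = (norm y)\<^sup>2 - \<sigma>" by (simp add: cinner_self)
  moreover have "Re (cinner (y - s) (y - s)) \<ge> 0" using cinner_ge_zero by blast
  ultimately show ?thesis unfolding \<sigma>_def by linarith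
qed

lemma coeff_tail:
  assumes "\<epsilon> > 0"
  shows "\<exists>F0. finite F0 \<and> F0 \<subseteq> B \<and> (\<forall>G. finite G \<longrightarrow> G \<subseteq> B \<longrightarrow> G \<inter> F0 = {} \<longrightarrow>
            (\<Sum>e\<in>G. (cmod (cinner e y))\<^sup>2) < \<epsilon>)"
proof -
  let ?f = "\<lambda>e. (cmod (cinner e y))\<^sup>2"
  let ?I = "{F. finite F \<and> F \<subseteq> B}"
  define S where "S = (SUP F\<in>?I. sum ?f F)"
  have bdd: "bdd_above (sum ?f ` ?I)"
    using bessel by (auto intro!: bdd_aboveI[of _ "(norm y)\<^sup>2"])
  have ne: "?I \<noteq> {}" by (auto intro: exI[of _ "{}"])
  have "S - \<epsilon> < S" using assms by simp
  then obtain F0 where F0: "F0 \<in> ?I" "S - \<epsilon> < sum ?f F0"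
    unfolding S_def using less_cSUP_iff[OF ne bdd] by blast
  have "(\<Sum>e\<in>G. ?f e) < \<epsilon>" if G: "finite G" "G \<subseteq> B" "G \<inter> F0 = {}" for G
  proof -
    have "sum ?f (F0 \<union> G) \<le> S" unfolding S_def
      by (rule cSUP_upper[OF _ bdd]) (use F0 G in auto)
    moreover have "sum ?f (F0 \<union> G) = sum ?f F0 + sum ?f G"
      by (rule sum.union_disjoint) (use F0 G in auto)
    ultimately show ?thesis using F0 by linarith
  qed
  moreover have "finite F0" "F0 \<subseteq> B" using F0(1) by auto
  ultimately show ?thesis by (intro exI[of _ F0] conjI allI impI) auto
qed

lemma expansion_summable: "(\<lambda>e. cinner e y *\<^sub>C e) summable_on B"
proof (rule summable_on_tail_Cauchy)
  fix \<epsilon> :: real assume "\<epsilon> > 0"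
  then have "\<epsilon>\<^sup>2 > 0" by simp
  from coeff_tail[OF this, of y] obtain F0 where F0all: "finite F0 \<and> F0 \<subseteq> B \<and>
    (\<forall>G. finite G \<longrightarrow> G \<subseteq> B \<longrightarrow> G \<inter> F0 = {} \<longrightarrow> (\<Sum>e\<in>G. (cmod (cinner e y))\<^sup>2) < \<epsilon>\<^sup>2)"
    by (rule exE)
  note F0 = F0all[THEN conjunct1] F0all[THEN conjunct2, THEN conjunct1] F0all[THEN conjunct2, THEN conjunct2]
  have "norm (\<Sum>e\<in>G. cinner e y *\<^sub>C e) < \<epsilon>" if "finite G" "G \<subseteq> B" "G \<inter> F0 = {}" for G
  proof -
    have "(norm (\<Sum>e\<in>G. cinner e y *\<^sub>C e))\<^sup>2 < \<epsilon>\<^sup>2"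
      using onb_norm_sum[OF that(1,2)] F0(3)[rule_format, OF that] by simp
    then show ?thesis using \<open>\<epsilon> > 0\<close> by (simp add: power_less_imp_less_base)
  qed
  then show "\<exists>F0. finite F0 \<and> F0 \<subseteq> B \<and> (\<forall>G. finite G \<longrightarrow> G \<subseteq> B \<longrightarrow> G \<inter> F0 = {} \<longrightarrow>
      norm (\<Sum>e\<in>G. cinner e y *\<^sub>C e) < \<epsilon>)" using F0 by blast
qed

lemma expansion: "((\<lambda>e. cinner e y *\<^sub>C e) has_sum y) B"
proof -
  define z where "z = infsum (\<lambda>e. cinner e y *\<^sub>C e) B"
  have z: "((\<lambda>e. cinner e y *\<^sub>C e) has_sum z) B"
    unfolding z_def using expansion_summable by (simp add: summable_iff_has_sum_infsum)
  have "cinner e0 (y - z) = 0" if e0: "e0 \<in> B" for e0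
  proof -
    have bl: "bounded_linear (\<lambda>v. cinner e0 ((\<lambda>x. x) v))"
      by (rule bcl_functional[OF bcl_id])
    have h1: "((\<lambda>e. cinner e0 (cinner e y *\<^sub>C e)) has_sum cinner e0 z) B"
      using has_sum_bounded_linear[OF bl z] by simp
    have h2: "((\<lambda>e. cinner e0 (cinner e y *\<^sub>C e)) has_sum cinner e0 y) B"
    proof -
      have "((\<lambda>e. cinner e0 y) has_sum (\<Sum>e\<in>{e0}. cinner e0 y)) {e0}"
        by (rule has_sum_finite) simp
      then have "((\<lambda>e. cinner e0 y) has_sum cinner e0 y) {e0}" by simp
      then show ?thesis
        by (rule has_sum_cong_neutral[THEN iffD1, rotated -1])
           (use e0 in \<open>auto simp: cinner_scaleC_right onb_delta\<close>)
    qed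
    have "cinner e0 z = cinner e0 y" using has_sum_unique[OF h1 h2] .
    then show ?thesis by (simp add: cinner_diff_right)
  qed
  then have "y - z = 0" by (rule onb_total)
  then show ?thesis using z by simp
qed

lemma parseval_functional:
  assumes T: "bounded_clinear T"
  shows "((\<lambda>e. cinner e y * cinner w (T e)) has_sum cinner w (T y)) B"
  using has_sum_bounded_linear[OF bcl_functional[OF T, of w] expansion[of y]]
  by (simp add: bcl_scaleC[OF T] cinner_scaleC_right)

end

definition rank1 :: "'a::complex_inner \<Rightarrow> 'a \<Rightarrow> 'a \<Rightarrow> 'a" where
  "rank1 x y = (\<lambda>z. cinner y z *\<^sub>C x)"

context
  fixes B :: "'a::{complex_inner,complete_space} set"
  assumes ONB: "orthonormal_basis B"
begin

lemma hs_rank1: "hilbert_schmidt B (rank1 x y)"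
proof -
  have s: "(\<lambda>e. (cmod (cinner e y))\<^sup>2) summable_on B"
    by (rule nonneg_bdd_above_summable_on)
       (use bessel[OF ONB] in \<open>auto intro!: bdd_aboveI[of _ "(norm y)\<^sup>2"]\<close>)
  have "(\<lambda>e. (cmod (cinner e y))\<^sup>2 * (norm x)\<^sup>2) summable_on B"
    by (rule summable_on_cmult_left[OF s])
  moreover have "(norm (rank1 x y e))\<^sup>2 = (cmod (cinner e y))\<^sup>2 * (norm x)\<^sup>2" for e
  proof -
    have "cmod (cinner y e) = cmod (cinner e y)" by (metis cinner_commute complex_mod_cnj)
    then show ?thesis by (simp add: rank1_def norm_scaleC power_mult_distrib)
  qed
  ultimately show ?thesis unfolding hilbert_schmidt_def using bcl_rank_one[of y x]
    by (simp add: rank1_def)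
qed

lemma hs_inner_rank1_self:
  "hs_inner B (rank1 x y) (rank1 x y) = complex_of_real ((norm x)\<^sup>2 * (norm y)\<^sup>2)"
proof -
  have h: "((\<lambda>e. cinner e y * cinner y ((\<lambda>z. z) e)) has_sum cinner y ((\<lambda>z. z) y)) B"
    by (rule parseval_functional[OF ONB bcl_id])
  have "((\<lambda>e. cinner e y * cinner y e * cinner x x) has_sum (cinner y y * cinner x x)) B"
    using has_sum_cmult_left[OF h] by simp
  moreover have "cinner (rank1 x y e) (rank1 x y e) = cinner e y * cinner y e * cinner x x" for e
    by (simp add: rank1_def cinner_scaleC_left cinner_scaleC_right cinner_commute[of y e])
  ultimately have "hs_inner B (rank1 x y) (rank1 x y) = cinner y y * cinner x x"
    unfolding hs_inner_def by (simp add: infsumI)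
  then show ?thesis by (simp add: cinner_self mult.commute)
qed

lemma hs_inner_rank1_A:
  assumes ops: "bounded_clinear a1" "bounded_clinear a2" "bounded_clinear b1" "bounded_clinear b2"
  shows "hs_inner B (rank1 x y) (\<lambda>z. a1 (rank1 x y (b1 z)) + a2 (rank1 x y (b2 z))) =
         cinner x (a1 x) * cinner y (b1 y) + cinner x (a2 x) * cinner y (b2 y)"
proof -
  define T where "T = (\<lambda>z. cinner x (a1 x) *\<^sub>C b1 z + cinner x (a2 x) *\<^sub>C b2 z)"
  have T: "bounded_clinear T" unfolding T_def by (intro bcl_plus bcl_scale ops)
  have h: "((\<lambda>e. cinner e y * cinner y (T e)) has_sum cinner y (T y)) B"
    by (rule parseval_functional[OF ONB T])
  have "cinner (rank1 x y e) (a1 (rank1 x y (b1 e)) + a2 (rank1 x y (b2 e))) = cinner e y * cinner y (T e)" for e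
    by (simp add: rank1_def T_def bcl_scaleC[OF ops(1)] bcl_scaleC[OF ops(2)] cinner_add_right
        cinner_scaleC_left cinner_scaleC_right cinner_commute[of y e] algebra_simps)
  then have "hs_inner B (rank1 x y) (\<lambda>z. a1 (rank1 x y (b1 z)) + a2 (rank1 x y (b2 z))) = cinner y (T y)"
    unfolding hs_inner_def using h by (simp add: infsumI)
  then show ?thesis by (simp add: T_def cinner_add_right cinner_scaleC_right mult.commute)
qed

lemma key:
  assumes ops: "bounded_clinear a1" "bounded_clinear a2" "bounded_clinear b1" "bounded_clinear b2"
    and A_def: "\<And>\<eta>. A \<eta> = (\<lambda>x. a1 (\<eta> (b1 x)) + a2 (\<eta> (b2 x)))"
    and A_posdef: "posdef_wrt (hs_inner B) {\<eta>. hilbert_schmidt B \<eta>} A"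
  shows "\<exists>c>0. \<forall>x y. Im (cinner x (a1 x) * cinner y (b1 y) + cinner x (a2 x) * cinner y (b2 y)) = 0 \<and>
           Re (cinner x (a1 x) * cinner y (b1 y) + cinner x (a2 x) * cinner y (b2 y)) \<ge> c * ((norm x)\<^sup>2 * (norm y)\<^sup>2)"
proof -
  obtain c where c: "c > 0" "\<And>\<eta>. hilbert_schmidt B \<eta> \<Longrightarrow> Im (hs_inner B \<eta> (A \<eta>)) = 0 \<and>
      Re (hs_inner B \<eta> (A \<eta>)) \<ge> c * Re (hs_inner B \<eta> \<eta>)"
    using A_posdef unfolding posdef_wrt_def by auto
  show ?thesis
  proof (intro exI[of _ c] conjI allI c(1))
    fix x y :: 'a
    have e: "hs_inner B (rank1 x y) (A (rank1 x y)) =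
         cinner x (a1 x) * cinner y (b1 y) + cinner x (a2 x) * cinner y (b2 y)"
      unfolding A_def by (rule hs_inner_rank1_A[OF ops])
    from c(2)[OF hs_rank1, of x y] show "Im (cinner x (a1 x) * cinner y (b1 y) + cinner x (a2 x) * cinner y (b2 y)) = 0"
        "Re (cinner x (a1 x) * cinner y (b1 y) + cinner x (a2 x) * cinner y (b2 y)) \<ge> c * ((norm x)\<^sup>2 * (norm y)\<^sup>2)"
      unfolding e hs_inner_rank1_self by auto
  qed
qed

end

definition qf :: "('a::complex_inner \<Rightarrow> 'a) \<Rightarrow> 'a \<Rightarrow> complex" where
  "qf T x = cinner x (T x)"

lemma comb4:
  fixes X Y Z W :: "'a::complex_vector"
  shows "(k1 *\<^sub>C X + k2 *\<^sub>C Y + k3 *\<^sub>C Z + k4 *\<^sub>C W) + (m1 *\<^sub>C X + m2 *\<^sub>C Y + m3 *\<^sub>C Z + m4 *\<^sub>C W)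
     = (k1 + m1) *\<^sub>C X + (k2 + m2) *\<^sub>C Y + (k3 + m3) *\<^sub>C Z + (k4 + m4) *\<^sub>C W"
  by (simp add: scaleC_add_left add_ac)

lemma transform:
  fixes a1 a2 b1 b2 \<eta> :: "'a::complex_inner \<Rightarrow> 'a"
  assumes ops: "bounded_clinear a1" "bounded_clinear a2" "bounded_clinear b1" "bounded_clinear b2"
    and eta: "bounded_clinear \<eta>"
    and c1: "p1 * r11 + p2 * r21 = 1" and c2: "p1 * r12 + p2 * r22 = 0"
    and c3: "q1 * r11 + q2 * r21 = 0" and c4: "q1 * r12 + q2 * r22 = 1"
  shows "(\<lambda>x. p1 *\<^sub>C a1 x + q1 *\<^sub>C a2 x) (\<eta> ((\<lambda>x. r11 *\<^sub>C b1 x + r12 *\<^sub>C b2 x) x)) +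
         (\<lambda>x. p2 *\<^sub>C a1 x + q2 *\<^sub>C a2 x) (\<eta> ((\<lambda>x. r21 *\<^sub>C b1 x + r22 *\<^sub>C b2 x) x)) =
         a1 (\<eta> (b1 x)) + a2 (\<eta> (b2 x))"
proof -
  define u where "u = \<eta> (b1 x)"
  define w where "w = \<eta> (b2 x)"
  have e1: "(\<lambda>x. p1 *\<^sub>C a1 x + q1 *\<^sub>C a2 x) (\<eta> ((\<lambda>x. r11 *\<^sub>C b1 x + r12 *\<^sub>C b2 x) x)) =
      (p1 * r11) *\<^sub>C a1 u + (p1 * r12) *\<^sub>C a1 w + (q1 * r11) *\<^sub>C a2 u + (q1 * r12) *\<^sub>C a2 w"
    by (simp add: u_def w_def bcl_add[OF eta] bcl_scaleC[OF eta] bcl_add[OF ops(1)] bcl_scaleC[OF ops(1)]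
        bcl_add[OF ops(2)] bcl_scaleC[OF ops(2)] scaleC_add_right scaleC_scaleC add_ac)
  have e2: "(\<lambda>x. p2 *\<^sub>C a1 x + q2 *\<^sub>C a2 x) (\<eta> ((\<lambda>x. r21 *\<^sub>C b1 x + r22 *\<^sub>C b2 x) x)) =
      (p2 * r21) *\<^sub>C a1 u + (p2 * r22) *\<^sub>C a1 w + (q2 * r21) *\<^sub>C a2 u + (q2 * r22) *\<^sub>C a2 w"
    by (simp add: u_def w_def bcl_add[OF eta] bcl_scaleC[OF eta] bcl_add[OF ops(1)] bcl_scaleC[OF ops(1)]
        bcl_add[OF ops(2)] bcl_scaleC[OF ops(2)] scaleC_add_right scaleC_scaleC add_ac)
  show ?thesis unfolding e1 e2 comb4 c1 c2 c3 c4 by (simp add: u_def w_def)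
qed

lemma transform_qf:
  fixes a1 a2 b1 b2 :: "'a::complex_inner \<Rightarrow> 'a"
  assumes c1: "p1 * r11 + p2 * r21 = 1" and c2: "p1 * r12 + p2 * r22 = 0"
    and c3: "q1 * r11 + q2 * r21 = 0" and c4: "q1 * r12 + q2 * r22 = 1"
  shows "qf (\<lambda>x. p1 *\<^sub>C a1 x + q1 *\<^sub>C a2 x) x * qf (\<lambda>x. r11 *\<^sub>C b1 x + r12 *\<^sub>C b2 x) y +
         qf (\<lambda>x. p2 *\<^sub>C a1 x + q2 *\<^sub>C a2 x) x * qf (\<lambda>x. r21 *\<^sub>C b1 x + r22 *\<^sub>C b2 x) y =
         qf a1 x * qf b1 y + qf a2 x * qf b2 y"
proof -
  have "qf (\<lambda>x. p1 *\<^sub>C a1 x + q1 *\<^sub>C a2 x) x * qf (\<lambda>x. r11 *\<^sub>C b1 x + r12 *\<^sub>C b2 x) y +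
         qf (\<lambda>x. p2 *\<^sub>C a1 x + q2 *\<^sub>C a2 x) x * qf (\<lambda>x. r21 *\<^sub>C b1 x + r22 *\<^sub>C b2 x) y =
      qf a1 x * qf b1 y * (p1 * r11 + p2 * r21) + qf a1 x * qf b2 y * (p1 * r12 + p2 * r22) +
      qf a2 x * qf b1 y * (q1 * r11 + q2 * r21) + qf a2 x * qf b2 y * (q1 * r12 + q2 * r22)"
    by (simp add: qf_def cinner_add_right cinner_scaleC_right algebra_simps)
  then show ?thesis unfolding c1 c2 c3 c4 by simp
qed

lemma qf_lin: "qf (\<lambda>x. p *\<^sub>C a1 x + q *\<^sub>C a2 x) x = p * qf a1 x + q * qf a2 x"
  by (simp add: qf_def cinner_add_right cinner_scaleC_right)

lemma bcl_lin:
  fixes a1 a2 :: "'a::complex_inner \<Rightarrow> 'a"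
  shows "bounded_clinear a1 \<Longrightarrow> bounded_clinear a2 \<Longrightarrow> bounded_clinear (\<lambda>x. p *\<^sub>C a1 x + q *\<^sub>C a2 x)"
  by (intro bcl_plus bcl_scale)

lemma finish_G:
  fixes haA haB hbA hbB :: "'a::complex_inner \<Rightarrow> 'a" and R :: "('a \<Rightarrow> 'a) \<Rightarrow> 'a \<Rightarrow> 'a"
  assumes ops: "bounded_clinear haA" "bounded_clinear haB" "bounded_clinear hbA" "bounded_clinear hbB"
    and n1: "\<And>x. Im (qf haA x) = 0 \<and> Re (qf haA x) \<ge> 0"
    and n2: "\<And>x. Im (qf haB x) = 0 \<and> Re (qf haB x) \<ge> 0"
    and c: "c > 0" "\<And>x. Re (qf haA x) + Re (qf haB x) \<ge> c * (norm x)\<^sup>2"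
    and p1: "ca > 0" "\<And>y. Im (qf hbA y) = 0 \<and> Re (qf hbA y) \<ge> ca * (norm y)\<^sup>2"
    and p2: "cb > 0" "\<And>y. Im (qf hbB y) = 0 \<and> Re (qf hbB y) \<ge> cb * (norm y)\<^sup>2"
    and iden: "\<And>\<eta>. bounded_clinear \<eta> \<Longrightarrow> R \<eta> = (\<lambda>x. haA (\<eta> (hbA x)) + haB (\<eta> (hbB x)))"
  shows "bounded_clinear haA \<and> bounded_clinear haB \<and> bounded_clinear hbA \<and> bounded_clinear hbB \<and>
           nonneg_wrt cinner UNIV haA \<and> nonneg_wrt cinner UNIV haB \<and>
           {x. haA x = 0} \<inter> {x. haB x = 0} = {0} \<and>
           posdef_wrt cinner UNIV hbA \<and> posdef_wrt cinner UNIV hbB \<and>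
           (\<forall>\<eta>. bounded_clinear \<eta> \<longrightarrow> R \<eta> = (\<lambda>x. haA (\<eta> (hbA x)) + haB (\<eta> (hbB x))))"
proof (intro conjI ops allI impI iden)
  show "nonneg_wrt cinner UNIV haA" "nonneg_wrt cinner UNIV haB"
    unfolding nonneg_wrt_def using n1 n2 by (auto simp: qf_def)
  show "posdef_wrt cinner UNIV hbA" "posdef_wrt cinner UNIV hbB"
    unfolding posdef_wrt_def using p1 p2 by (auto simp: qf_def Re_cinner_self)
  show "{x. haA x = 0} \<inter> {x. haB x = 0} = {0}"
  proof
    show "{0} \<subseteq> {x. haA x = 0} \<inter> {x. haB x = 0}" using bcl_zero[OF ops(1)] bcl_zero[OF ops(2)] by auto
    show "{x. haA x = 0} \<inter> {x. haB x = 0} \<subseteq> {0}"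
    proof
      fix x assume "x \<in> {x. haA x = 0} \<inter> {x. haB x = 0}"
      then have "qf haA x = 0" "qf haB x = 0" by (auto simp: qf_def)
      then have "c * (norm x)\<^sup>2 \<le> 0" using c(2)[of x] by simp
      then have "norm x = 0" using c(1) by (simp add: mult_le_0_iff)
      then show "x \<in> {0}" by simp
    qed
  qed
qed

lemma finish_F:
  fixes a b :: "'a::complex_inner \<Rightarrow> 'a" and R :: "('a \<Rightarrow> 'a) \<Rightarrow> 'a \<Rightarrow> 'a"
  assumes ops: "bounded_clinear a" "bounded_clinear b"
    and n1: "c > 0" "\<And>x. Im (qf a x) = 0 \<and> Re (qf a x) \<ge> c * (norm x)\<^sup>2"
    and p1: "c1 > 0" "\<And>y. Im (qf b y) = 0 \<and> Re (qf b y) \<ge> c1 * (norm y)\<^sup>2"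
    and iden: "\<And>\<eta>. bounded_clinear \<eta> \<Longrightarrow> R \<eta> = (\<lambda>x. a (\<eta> (b x)))"
  shows "\<exists>ha1 ha2 hb1 hb2 :: 'a \<Rightarrow> 'a. bounded_clinear ha1 \<and> bounded_clinear ha2 \<and> bounded_clinear hb1 \<and> bounded_clinear hb2 \<and>
           nonneg_wrt cinner UNIV ha1 \<and> nonneg_wrt cinner UNIV ha2 \<and>
           {x. ha1 x = 0} \<inter> {x. ha2 x = 0} = {0} \<and>
           posdef_wrt cinner UNIV hb1 \<and> posdef_wrt cinner UNIV hb2 \<and>
           (\<forall>\<eta>. bounded_clinear \<eta> \<longrightarrow> R \<eta> = (\<lambda>x. ha1 (\<eta> (hb1 x)) + ha2 (\<eta> (hb2 x))))"
proof (rule exI[of _ a], rule exI[of _ "\<lambda>x::'a. 0::'a"], rule exI[of _ b], rule exI[of _ "\<lambda>x::'a. x"])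
  show "bounded_clinear a \<and> bounded_clinear (\<lambda>x::'a. 0::'a) \<and> bounded_clinear b \<and> bounded_clinear (\<lambda>x::'a. x) \<and>
           nonneg_wrt cinner UNIV a \<and> nonneg_wrt cinner UNIV (\<lambda>x::'a. 0::'a) \<and>
           {x. a x = 0} \<inter> {x. (\<lambda>x::'a. 0::'a) x = 0} = {0} \<and>
           posdef_wrt cinner UNIV b \<and> posdef_wrt cinner UNIV (\<lambda>x::'a. x) \<and>
           (\<forall>\<eta>. bounded_clinear \<eta> \<longrightarrow> R \<eta> = (\<lambda>x. a (\<eta> (b x)) + (\<lambda>x::'a. 0::'a) (\<eta> ((\<lambda>x::'a. x) x))))"
  proof (rule finish_G[where haA=a and haB="\<lambda>x. 0" and hbA=b and hbB="\<lambda>x. x" and c=c and ca=c1 and cb=1])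
    show "bounded_clinear (\<lambda>x::'a. 0::'a)" by (rule bcl_zero_op)
    show "bounded_clinear (\<lambda>x::'a. x::'a)" by (rule bcl_id)
    show "\<And>y. Im (qf (\<lambda>x::'a. x) y) = 0 \<and> Re (qf (\<lambda>x::'a. x) y) \<ge> 1 * (norm y)\<^sup>2"
      by (simp add: qf_def cinner_self)
    show "Im (qf a x) = 0 \<and> Re (qf a x) \<ge> 0" for x
    proof -
      have "c * (norm x)\<^sup>2 \<ge> 0" using n1(1) by simp
      then show ?thesis using n1(2)[of x] by linarith
    qed
  qed (use ops n1 p1 iden in \<open>auto simp: qf_def\<close>)
qed

lemma real_inf_affine:
  fixes S :: "real set"
  assumes ne: "S \<noteq> {}" and bdd: "bdd_below S" and h: "\<And>s. s \<in> S \<Longrightarrow> u + s * v \<ge> m"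
  shows "u + Inf S * v \<ge> m"
proof -
  obtain s0 where s0: "s0 \<in> S" using ne by blast
  consider "v > 0" | "v = 0" | "v < 0" by linarith
  then show ?thesis
  proof cases
    case 1
    have "(m - u) / v \<le> Inf S"
      by (rule cInf_greatest[OF ne]) (use h 1 in \<open>auto simp: field_simps\<close>)
    then show ?thesis using 1 by (simp add: field_simps)
  next
    case 2 then show ?thesis using h[OF s0] by simp
  next
    case 3
    have "Inf S \<le> s0" by (rule cInf_lower[OF s0 bdd])
    then have "Inf S * v \<ge> s0 * v" using 3 by (simp add: mult_right_mono_neg)
    then show ?thesis using h[OF s0] by linarith
  qed
qed

lemma real_sup_affine:
  fixes S :: "real set"
  assumes ne: "S \<noteq> {}" and bdd: "bdd_above S" and h: "\<And>s. s \<in> S \<Longrightarrow> u + s * v \<ge> m"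
  shows "u + Sup S * v \<ge> m"
proof -
  have ne': "uminus ` S \<noteq> {}" using ne by simp
  have bdd': "bdd_below (uminus ` S)" using bdd by (simp add: bdd_below_uminus)
  have "u + Inf (uminus ` S) * (- v) \<ge> m"
    by (rule real_inf_affine[OF ne' bdd']) (use h in auto)
  moreover have "Inf (uminus ` S) = - Sup S"
    by (simp add: Inf_real_def image_image)
  ultimately show ?thesis by simp
qed

lemma div_real:
  assumes "\<rho> > 0" "Im (complex_of_real \<rho> * w) = 0" "Re (complex_of_real \<rho> * w) \<ge> m"
  shows "Im w = 0 \<and> Re w \<ge> m / \<rho>"
  using assms by (simp add: field_simps)

lemma real_complex: "Im z = 0 \<Longrightarrow> z = complex_of_real (Re z)"
  by (simp add: complex_eq_iff)

lemma qf_zero_arg: "bounded_clinear T \<Longrightarrow> qf T 0 = 0"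
  by (simp add: qf_def)

lemma core:
  fixes a1 a2 b1 b2 :: "'a::complex_inner \<Rightarrow> 'a" and R :: "('a \<Rightarrow> 'a) \<Rightarrow> 'a \<Rightarrow> 'a"
  assumes ops: "bounded_clinear a1" "bounded_clinear a2" "bounded_clinear b1" "bounded_clinear b2"
    and c: "c > 0"
    and key: "\<And>x y. Im (qf a1 x * qf b1 y + qf a2 x * qf b2 y) = 0 \<and>
                Re (qf a1 x * qf b1 y + qf a2 x * qf b2 y) \<ge> c * ((norm x)\<^sup>2 * (norm y)\<^sup>2)"
    and iden: "\<And>\<eta>. bounded_clinear \<eta> \<Longrightarrow> R \<eta> = (\<lambda>x. a1 (\<eta> (b1 x)) + a2 (\<eta> (b2 x)))"
  shows "\<exists>ha1 ha2 hb1 hb2 :: 'a \<Rightarrow> 'a. bounded_clinear ha1 \<and> bounded_clinear ha2 \<and> bounded_clinear hb1 \<and> bounded_clinear hb2 \<and>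
           nonneg_wrt cinner UNIV ha1 \<and> nonneg_wrt cinner UNIV ha2 \<and>
           {x. ha1 x = 0} \<inter> {x. ha2 x = 0} = {0} \<and>
           posdef_wrt cinner UNIV hb1 \<and> posdef_wrt cinner UNIV hb2 \<and>
           (\<forall>\<eta>. bounded_clinear \<eta> \<longrightarrow> R \<eta> = (\<lambda>x. ha1 (\<eta> (hb1 x)) + ha2 (\<eta> (hb2 x))))"
proof (cases "\<forall>x::'a. x = 0")
  case True
  show ?thesis
  proof (rule exI[of _ "\<lambda>x::'a. 0::'a"], rule exI[of _ "\<lambda>x::'a. 0::'a"], rule exI[of _ "\<lambda>x::'a. x"], rule exI[of _ "\<lambda>x::'a. x"],
      rule finish_G[where haA="\<lambda>x. 0" and haB="\<lambda>x. 0" and hbA="\<lambda>x. x" and hbB="\<lambda>x. x" and c=1 and ca=1 and cb=1])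
    show "bounded_clinear (\<lambda>x::'a. 0::'a)" by (rule bcl_zero_op)
    show "bounded_clinear (\<lambda>x::'a. x::'a)" by (rule bcl_id)
    show "R \<eta> = (\<lambda>x. (\<lambda>x::'a. 0::'a) (\<eta> ((\<lambda>x. x) x)) + (\<lambda>x::'a. 0::'a) (\<eta> ((\<lambda>x. x) x)))" for \<eta>
      using True by (intro ext) metis
  qed (use True bcl_zero_op bcl_id in \<open>auto simp: qf_def cinner_self\<close>)
next
  case False
  then obtain x0 :: 'a where x0: "x0 \<noteq> 0" by blast
  define y1 where "y1 = complex_of_real (1 / norm x0) *\<^sub>C x0"
  have ny1: "norm y1 = 1" using x0 by (simp add: y1_def norm_scaleC norm_divide)
  then have y1nz: "y1 \<noteq> 0" by auto
  define Q where "Q x y = qf a1 x * qf b1 y + qf a2 x * qf b2 y" for x y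
  have KQ: "Im (Q x y) = 0" "Re (Q x y) \<ge> c * ((norm x)\<^sup>2 * (norm y)\<^sup>2)" for x y
    using key[of x y] by (auto simp: Q_def)
  define p1 where "p1 = qf b1 y1"
  define q1 where "q1 = qf b2 y1"
  have "\<exists>p2 q2. p1 * q2 - p2 * q1 \<noteq> 0 \<and>
      ((\<exists>y2. p2 = qf b1 y2 \<and> q2 = qf b2 y2) \<or> (\<forall>y. p1 * qf b2 y - qf b1 y * q1 = 0))"
  proof (cases "\<exists>y2. p1 * qf b2 y2 - qf b1 y2 * q1 \<noteq> 0")
    case True
    then obtain y2 where "p1 * qf b2 y2 - qf b1 y2 * q1 \<noteq> 0" by blast
    then show ?thesis by (intro exI[of _ "qf b1 y2"] exI[of _ "qf b2 y2"]) (auto simp: mult.commute)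
  next
    case F2: False
    have "p1 \<noteq> 0 \<or> q1 \<noteq> 0"
    proof (rule ccontr)
      assume "\<not> (p1 \<noteq> 0 \<or> q1 \<noteq> 0)"
      then have "Q y1 y1 = 0" by (simp add: Q_def p1_def q1_def)
      then show False using KQ(2)[of y1 y1] ny1 c by simp
    qed
    then show ?thesis
    proof
      assume "p1 \<noteq> 0"
      then show ?thesis using F2 by (intro exI[of _ 0] exI[of _ 1]) auto
    next
      assume "q1 \<noteq> 0"
      then show ?thesis using F2 by (intro exI[of _ 1] exI[of _ 0]) auto
    qed
  qed
  then obtain p2 q2 where d0: "p1 * q2 - p2 * q1 \<noteq> 0"
    and cases: "(\<exists>y2. p2 = qf b1 y2 \<and> q2 = qf b2 y2) \<or> (\<forall>y. p1 * qf b2 y - qf b1 y * q1 = 0)"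
    by blast
  define d where "d = p1 * q2 - p2 * q1"
  have d: "d \<noteq> 0" using d0 by (simp add: d_def)
  define r11 where "r11 = q2 / d"
  define r12 where "r12 = - p2 / d"
  define r21 where "r21 = - q1 / d"
  define r22 where "r22 = p1 / d"
  have cc: "p1 * r11 + p2 * r21 = 1" "p1 * r12 + p2 * r22 = 0"
           "q1 * r11 + q2 * r21 = 0" "q1 * r12 + q2 * r22 = 1"
    using d unfolding r11_def r12_def r21_def r22_def
    by (simp_all add: field_simps) (simp_all add: d_def algebra_simps)
  define A1 where "A1 = (\<lambda>x. p1 *\<^sub>C a1 x + q1 *\<^sub>C a2 x)"
  define A2 where "A2 = (\<lambda>x. p2 *\<^sub>C a1 x + q2 *\<^sub>C a2 x)"
  define B1 where "B1 = (\<lambda>x. r11 *\<^sub>C b1 x + r12 *\<^sub>C b2 x)"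
  define B2 where "B2 = (\<lambda>x. r21 *\<^sub>C b1 x + r22 *\<^sub>C b2 x)"
  have bA1: "bounded_clinear A1" and bA2: "bounded_clinear A2"
    and bB1: "bounded_clinear B1" and bB2: "bounded_clinear B2"
    unfolding A1_def A2_def B1_def B2_def using ops by (auto intro!: bcl_lin)
  have iden1: "R \<eta> = (\<lambda>x. A1 (\<eta> (B1 x)) + A2 (\<eta> (B2 x)))" if "bounded_clinear \<eta>" for \<eta>
    unfolding iden[OF that] A1_def A2_def B1_def B2_def
    using transform[OF ops that cc] by simp
  have QQ: "Q x y = qf A1 x * qf B1 y + qf A2 x * qf B2 y" for x y
    unfolding Q_def A1_def A2_def B1_def B2_def by (rule transform_qf[OF cc, symmetric])
  have qA1: "qf A1 x = Q x y1" for x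
    unfolding A1_def qf_lin Q_def p1_def q1_def by (simp add: mult.commute)
  have A1pos: "Im (qf A1 x) = 0 \<and> Re (qf A1 x) \<ge> c * (norm x)\<^sup>2" for x
    using KQ[of x y1] ny1 by (simp add: qA1)
  from cases show ?thesis
  proof
    assume "\<forall>y. p1 * qf b2 y - qf b1 y * q1 = 0"
    then have "qf B2 y = 0" for y
      unfolding B2_def qf_lin r21_def r22_def using d
      by (simp add: field_simps)
    then have B20: "B2 y = 0" for y
      using polarization_zero[OF bB2] by (simp add: qf_def)
    define r where "r = Re (qf A1 y1)"
    have r: "r > 0" using A1pos[of y1] ny1 c by (simp add: r_def)
    have rr: "qf A1 y1 = complex_of_real r" using A1pos[of y1] by (simp add: r_def complex_eq_iff)
    have B1pos: "Im (qf B1 y) = 0 \<and> Re (qf B1 y) \<ge> (c / r) * (norm y)\<^sup>2" for y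
    proof -
      have "Q y1 y = complex_of_real r * qf B1 y" using QQ[of y1 y] B20 unfolding rr by (simp add: qf_def)
      then have "Im (complex_of_real r * qf B1 y) = 0 \<and> Re (complex_of_real r * qf B1 y) \<ge> c * (norm y)\<^sup>2"
        using KQ[of y1 y] ny1 by simp
      then have h: "Im (qf B1 y) = 0 \<and> Re (qf B1 y) \<ge> c * (norm y)\<^sup>2 / r"
        using div_real[OF r] by blast
      have "(c / r) * (norm y)\<^sup>2 = c * (norm y)\<^sup>2 / r" by simp
      then show ?thesis using h by linarith
    qed
    show ?thesis
    proof (rule finish_F[OF bA1 bB1 c A1pos _ B1pos])
      show "c / r > 0" using c r by simp
      show "R \<eta> = (\<lambda>x. A1 (\<eta> (B1 x)))" if "bounded_clinear \<eta>" for \<eta>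
        unfolding iden1[OF that] B20 bcl_zero[OF that] bcl_zero[OF bA2] by simp
    qed
  next
    assume "\<exists>y2. p2 = qf b1 y2 \<and> q2 = qf b2 y2"
    then obtain y2 where y2: "p2 = qf b1 y2" "q2 = qf b2 y2" by blast
    have qA2: "qf A2 x = Q x y2" for x
      unfolding A2_def qf_lin Q_def y2 by (simp add: mult.commute)
    define P1 where "P1 x = Re (qf A1 x)" for x
    define P2 where "P2 x = Re (qf A2 x)" for x
    have P1e: "qf A1 x = complex_of_real (P1 x)" for x
      using A1pos[of x] by (simp add: P1_def complex_eq_iff)
    have P2e: "qf A2 x = complex_of_real (P2 x)" for x
      using KQ[of x y2] by (simp add: P2_def qA2 complex_eq_iff)
    have P1pos: "P1 x \<ge> c * (norm x)\<^sup>2" for x using A1pos[of x] by (simp add: P1_def)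
    have P1gt: "x \<noteq> 0 \<Longrightarrow> P1 x > 0" for x
      using P1pos[of x] c by (smt (verit) mult_pos_pos zero_less_norm_iff zero_less_power)
    obtain K1 where K1: "K1 > 0" "\<And>x. cmod (cinner x (A1 x)) \<le> K1 * (norm x)\<^sup>2"
      using bcl_quad_bound[OF bA1] by blast
    obtain K2 where K2: "K2 > 0" "\<And>x. cmod (cinner x (A2 x)) \<le> K2 * (norm x)\<^sup>2"
      using bcl_quad_bound[OF bA2] by blast
    have P1le: "P1 x \<le> K1 * (norm x)\<^sup>2" for x
      using K1(2)[of x] abs_Re_le_cmod[of "qf A1 x"] by (simp add: P1_def qf_def)
    have P2le: "\<bar>P2 x\<bar> \<le> K2 * (norm x)\<^sup>2" for x
      using K2(2)[of x] abs_Re_le_cmod[of "qf A2 x"] by (simp add: P2_def qf_def)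
    define t where "t x = P2 x / P1 x" for x
    have AT: "Im (qf B1 y + complex_of_real (t x) * qf B2 y) = 0 \<and>
              Re (qf B1 y + complex_of_real (t x) * qf B2 y) \<ge> (c / K1) * (norm y)\<^sup>2"
      if x: "x \<noteq> 0" for x y
    proof -
      have p: "P1 x > 0" by (rule P1gt[OF x])
      have "Q x y = complex_of_real (P1 x) * (qf B1 y + complex_of_real (t x) * qf B2 y)"
        unfolding QQ P1e P2e t_def using p by (simp add: field_simps)
      then have "Im (complex_of_real (P1 x) * (qf B1 y + complex_of_real (t x) * qf B2 y)) = 0 \<and>
          Re (complex_of_real (P1 x) * (qf B1 y + complex_of_real (t x) * qf B2 y)) \<ge> c * ((norm x)\<^sup>2 * (norm y)\<^sup>2)"
        using KQ[of x y] by simp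
      from div_real[OF p this[THEN conjunct1] this[THEN conjunct2]]
      have h: "Im (qf B1 y + complex_of_real (t x) * qf B2 y) = 0"
        "Re (qf B1 y + complex_of_real (t x) * qf B2 y) \<ge> c * ((norm x)\<^sup>2 * (norm y)\<^sup>2) / P1 x" by auto
      have "(c / K1) * (norm y)\<^sup>2 = (c * ((norm x)\<^sup>2 * (norm y)\<^sup>2)) / (K1 * (norm x)\<^sup>2)"
        using x K1 by (simp add: field_simps)
      also have "\<dots> \<le> c * ((norm x)\<^sup>2 * (norm y)\<^sup>2) / P1 x"
        by (rule divide_left_mono[OF P1le]) (use c p K1 x in auto)
      finally show ?thesis using h by linarith
    qed
    show ?thesis
    proof (cases "\<forall>x. x \<noteq> 0 \<longrightarrow> t x = t y1")
      case True
      define s where "s = t y1"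
      have P2s: "P2 x = s * P1 x" for x
      proof (cases "x = 0")
        case True
        then show ?thesis using qf_zero_arg[OF bA1] qf_zero_arg[OF bA2] by (simp add: P1_def P2_def)
      next
        case False
        then have "t x = s" using True by (simp add: s_def)
        then show ?thesis using P1gt[OF False] by (simp add: t_def field_simps)
      qed
      have Z: "qf (\<lambda>x. 1 *\<^sub>C A2 x + (- complex_of_real s) *\<^sub>C A1 x) x = 0" for x
        unfolding qf_lin P1e P2e P2s by simp
      have "1 *\<^sub>C A2 x + (- complex_of_real s) *\<^sub>C A1 x = 0" for x
        by (rule polarization_zero[OF bcl_lin[OF bA2 bA1], of _ _ x, OF Z[unfolded qf_def]])
      then have A2s: "A2 x = complex_of_real s *\<^sub>C A1 x" for x
        by (simp add: scaleC_minus_left eq_neg_iff_add_eq_0)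
      define Bs where "Bs = (\<lambda>x. 1 *\<^sub>C B1 x + complex_of_real s *\<^sub>C B2 x)"
      have bBs: "bounded_clinear Bs" unfolding Bs_def using bB1 bB2 by (rule bcl_lin)
      have Bspos: "Im (qf Bs y) = 0 \<and> Re (qf Bs y) \<ge> (c / K1) * (norm y)\<^sup>2" for y
        using AT[OF y1nz, of y] unfolding Bs_def qf_lin s_def by simp
      show ?thesis
      proof (rule finish_F[OF bA1 bBs c A1pos _ Bspos])
        show "c / K1 > 0" using c K1 by simp
        show "R \<eta> = (\<lambda>x. A1 (\<eta> (Bs x)))" if eta: "bounded_clinear \<eta>" for \<eta>
          unfolding iden1[OF eta] A2s Bs_def
          by (simp add: bcl_add[OF eta] bcl_scaleC[OF eta] bcl_add[OF bA1] bcl_scaleC[OF bA1])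
      qed
    next
      case False
      then obtain x2 where x2: "x2 \<noteq> 0" "t x2 \<noteq> t y1" by blast
      have ImB2: "Im (qf B2 y) = 0" for y
      proof -
        have "Im (qf B1 y) + t y1 * Im (qf B2 y) = 0" "Im (qf B1 y) + t x2 * Im (qf B2 y) = 0"
          using AT[OF y1nz, of y] AT[OF x2(1), of y] by auto
        then have "(t y1 - t x2) * Im (qf B2 y) = 0" unfolding left_diff_distrib by linarith
        then show ?thesis using x2(2) by simp
      qed
      have ImB1: "Im (qf B1 y) = 0" for y
        using AT[OF y1nz, of y] ImB2[of y] by simp
      define S where "S = t ` {x. x \<noteq> 0}"
      have Sne: "S \<noteq> {}" using y1nz by (auto simp: S_def)
      have tb: "\<bar>t x\<bar> \<le> K2 / c" if "x \<noteq> 0" for x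
      proof -
        have p: "P1 x > 0" by (rule P1gt[OF that])
        have n: "(norm x)\<^sup>2 > 0" using that by simp
        have "\<bar>t x\<bar> = \<bar>P2 x\<bar> / P1 x" using p by (simp add: t_def)
        also have "\<dots> \<le> (K2 * (norm x)\<^sup>2) / (c * (norm x)\<^sup>2)"
          by (rule frac_le) (use P2le[of x] P1pos[of x] c n K2 in auto)
        also have "\<dots> = K2 / c" using n by simp
        finally show ?thesis .
      qed
      have Sbb1: "bdd_below S" unfolding bdd_below_def S_def
        using tb by (intro exI[of _ "-(K2/c)"]) (force simp: abs_le_iff)
      have Sbb2: "bdd_above S" unfolding bdd_above_def S_def
        using tb by (intro exI[of _ "K2/c"]) (force simp: abs_le_iff)
      note Sbb = Sbb1 Sbb2
      define smin where "smin = Inf S"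
      define smax where "smax = Sup S"
      have tin: "smin \<le> t x \<and> t x \<le> smax" if "x \<noteq> 0" for x
        using that Sbb unfolding smin_def smax_def
        by (auto simp: S_def intro!: cInf_lower cSup_upper)
      have lt: "smin < smax" using tin[OF y1nz] tin[OF x2(1)] x2(2) by linarith
      define \<Delta> where "\<Delta> = smax - smin"
      have \<Delta>: "\<Delta> > 0" using lt by (simp add: \<Delta>_def)
      have affine: "Re (qf B1 y) + s * Re (qf B2 y) \<ge> (c / K1) * (norm y)\<^sup>2" if "s \<in> S" for s y
        using that AT[of _ y] by (auto simp: S_def)
      have Bmin: "Re (qf B1 y) + smin * Re (qf B2 y) \<ge> (c / K1) * (norm y)\<^sup>2" for y
        unfolding smin_def by (rule real_inf_affine[OF Sne Sbb(1) affine])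
      have Bmax: "Re (qf B1 y) + smax * Re (qf B2 y) \<ge> (c / K1) * (norm y)\<^sup>2" for y
        unfolding smax_def by (rule real_sup_affine[OF Sne Sbb(2) affine])
      define P1' where "P1' = complex_of_real (smax / \<Delta>)"
      define Q1' where "Q1' = complex_of_real (- 1 / \<Delta>)"
      define P2' where "P2' = complex_of_real (- smin / \<Delta>)"
      define Q2' where "Q2' = complex_of_real (1 / \<Delta>)"
      have cc2: "P1' * 1 + P2' * 1 = 1" "P1' * complex_of_real smin + P2' * complex_of_real smax = 0"
           "Q1' * 1 + Q2' * 1 = 0" "Q1' * complex_of_real smin + Q2' * complex_of_real smax = 1"
      proof -
        have D: "complex_of_real \<Delta> \<noteq> 0" using \<Delta> by simp
        have e: "complex_of_real smax = complex_of_real smin + complex_of_real \<Delta>" by (simp add: \<Delta>_def)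
        show "P1' * 1 + P2' * 1 = 1" "P1' * complex_of_real smin + P2' * complex_of_real smax = 0"
           "Q1' * 1 + Q2' * 1 = 0" "Q1' * complex_of_real smin + Q2' * complex_of_real smax = 1"
          unfolding P1'_def Q1'_def P2'_def Q2'_def of_real_divide of_real_minus e
          using D by (simp_all add: field_simps)
      qed
      define HA1 where "HA1 = (\<lambda>x. P1' *\<^sub>C A1 x + Q1' *\<^sub>C A2 x)"
      define HA2 where "HA2 = (\<lambda>x. P2' *\<^sub>C A1 x + Q2' *\<^sub>C A2 x)"
      define HB1 where "HB1 = (\<lambda>x. 1 *\<^sub>C B1 x + complex_of_real smin *\<^sub>C B2 x)"
      define HB2 where "HB2 = (\<lambda>x. 1 *\<^sub>C B1 x + complex_of_real smax *\<^sub>C B2 x)"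
      have qHA1: "qf HA1 x = complex_of_real ((smax * P1 x - P2 x) / \<Delta>)" for x
        unfolding HA1_def qf_lin P1e P2e P1'_def Q1'_def using \<Delta>
        by (simp add: field_simps flip: of_real_mult of_real_add of_real_diff of_real_minus of_real_divide)
      have qHA2: "qf HA2 x = complex_of_real ((P2 x - smin * P1 x) / \<Delta>)" for x
        unfolding HA2_def qf_lin P1e P2e P2'_def Q2'_def using \<Delta>
        by (simp add: field_simps flip: of_real_mult of_real_add of_real_diff of_real_minus of_real_divide)
      have Pcases: "smin * P1 x \<le> P2 x \<and> P2 x \<le> smax * P1 x" for x
      proof (cases "x = 0")
        case True
        then show ?thesis using qf_zero_arg[OF bA1] qf_zero_arg[OF bA2] by (simp add: P1_def P2_def)
      next
        case False
        have p: "P1 x > 0" by (rule P1gt[OF False])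
        have e: "P2 x = t x * P1 x" using p by (simp add: t_def)
        show ?thesis unfolding e using tin[OF False] p by (simp add: mult_right_mono)
      qed
      show ?thesis
      proof (rule exI[of _ HA1], rule exI[of _ HA2], rule exI[of _ HB1], rule exI[of _ HB2],
          rule finish_G[where haA=HA1 and haB=HA2 and hbA=HB1 and hbB=HB2 and c=c and ca="c / K1" and cb="c / K1"])
        show "bounded_clinear HA1" "bounded_clinear HA2" unfolding HA1_def HA2_def
          using bA1 bA2 by (auto intro!: bcl_lin)
        show "bounded_clinear HB1" "bounded_clinear HB2" unfolding HB1_def HB2_def
          by (rule bcl_lin[OF bB1 bB2])+
        show "Im (qf HA1 x) = 0 \<and> Re (qf HA1 x) \<ge> 0" for x
          unfolding qHA1 using Pcases[of x] \<Delta> by simp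
        show "Im (qf HA2 x) = 0 \<and> Re (qf HA2 x) \<ge> 0" for x
          unfolding qHA2 using Pcases[of x] \<Delta> by simp
        show "Re (qf HA1 x) + Re (qf HA2 x) \<ge> c * (norm x)\<^sup>2" for x
        proof -
          have "Re (qf HA1 x) + Re (qf HA2 x) = (smax * P1 x - P2 x) / \<Delta> + (P2 x - smin * P1 x) / \<Delta>"
            unfolding qHA1 qHA2 by simp
          also have "\<dots> = (\<Delta> * P1 x) / \<Delta>"
            by (simp add: \<Delta>_def add_divide_distrib[symmetric] algebra_simps)
          also have "\<dots> = P1 x" using \<Delta> by simp
          finally have "Re (qf HA1 x) + Re (qf HA2 x) = P1 x" .
          then show ?thesis using P1pos[of x] by simp
        qed
        show "c > 0" by (rule c)
        show "c / K1 > 0" "c / K1 > 0" using c K1 by simp_all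
        show "Im (qf HB1 y) = 0 \<and> Re (qf HB1 y) \<ge> (c / K1) * (norm y)\<^sup>2" for y
          unfolding HB1_def qf_lin using ImB1[of y] ImB2[of y] Bmin[of y] by simp
        show "Im (qf HB2 y) = 0 \<and> Re (qf HB2 y) \<ge> (c / K1) * (norm y)\<^sup>2" for y
          unfolding HB2_def qf_lin using ImB1[of y] ImB2[of y] Bmax[of y] by simp
        show "R \<eta> = (\<lambda>x. HA1 (\<eta> (HB1 x)) + HA2 (\<eta> (HB2 x)))" if eta: "bounded_clinear \<eta>" for \<eta>
          unfolding iden1[OF eta] HA1_def HA2_def HB1_def HB2_def
          using transform[OF bA1 bA2 bB1 bB2 eta cc2] by simp
      qed
    qed
  qed
qed

theorem theorem3p12:
  fixes B :: "'a::{complex_inner, complete_space} set"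
    and a1 a2 b1 b2 :: "'a \<Rightarrow> 'a"
    and A :: "('a \<Rightarrow> 'a) \<Rightarrow> ('a \<Rightarrow> 'a)"
  assumes separable: "countable B" "orthonormal_basis B"
    and ops: "bounded_clinear a1" "bounded_clinear a2" "bounded_clinear b1" "bounded_clinear b2"
    and A_def: "\<And>\<eta>. A \<eta> = (\<lambda>x. a1 (\<eta> (b1 x)) + a2 (\<eta> (b2 x)))"
    and A_posdef: "posdef_wrt (hs_inner B) {\<eta>. hilbert_schmidt B \<eta>} A"
  shows "\<exists>ha1 ha2 hb1 hb2 :: 'a \<Rightarrow> 'a.
           bounded_clinear ha1 \<and> bounded_clinear ha2 \<and> bounded_clinear hb1 \<and> bounded_clinear hb2 \<and>
           nonneg_wrt cinner UNIV ha1 \<and> nonneg_wrt cinner UNIV ha2 \<and>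
           {x. ha1 x = 0} \<inter> {x. ha2 x = 0} = {0} \<and>
           posdef_wrt cinner UNIV hb1 \<and> posdef_wrt cinner UNIV hb2 \<and>
           (\<forall>\<eta>. hilbert_schmidt B \<eta> \<longrightarrow> A \<eta> = (\<lambda>x. ha1 (\<eta> (hb1 x)) + ha2 (\<eta> (hb2 x))))"
proof -
  obtain c where c: "c > 0" and K: "\<And>x y. Im (cinner x (a1 x) * cinner y (b1 y) + cinner x (a2 x) * cinner y (b2 y)) = 0 \<and>
           Re (cinner x (a1 x) * cinner y (b1 y) + cinner x (a2 x) * cinner y (b2 y)) \<ge> c * ((norm x)\<^sup>2 * (norm y)\<^sup>2)"
    using key[OF separable(2) ops A_def A_posdef] by blast
  have "\<exists>ha1 ha2 hb1 hb2 :: 'a \<Rightarrow> 'a. bounded_clinear ha1 \<and> bounded_clinear ha2 \<and> bounded_clinear hb1 \<and> bounded_clinear hb2 \<and>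
           nonneg_wrt cinner UNIV ha1 \<and> nonneg_wrt cinner UNIV ha2 \<and>
           {x. ha1 x = 0} \<inter> {x. ha2 x = 0} = {0} \<and>
           posdef_wrt cinner UNIV hb1 \<and> posdef_wrt cinner UNIV hb2 \<and>
           (\<forall>\<eta>. bounded_clinear \<eta> \<longrightarrow> A \<eta> = (\<lambda>x. ha1 (\<eta> (hb1 x)) + ha2 (\<eta> (hb2 x))))"
    by (rule core[OF ops c]) (use K A_def in \<open>auto simp: qf_def\<close>)
  then show ?thesis unfolding hilbert_schmidt_def by blast
qed

end
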